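(* For every integer $p\ge1$ and every complex $z$, $$\sum_{n\ge0}\mathcal{B}_{n,p}\frac{z^n}{n!}=p\int_0^1\exp\big((e^z-1)t\big)(1-t)^{p-1}\,dt.$$
   Context: For an integer $p\ge0$, the $p$-Bell numbers $\mathcal{B}_{n,p}$ are defined by $\sum_{n\ge0}\mathcal{B}_{n,p}\frac{z^n}{n!}=\sum_{n\ge0}\binom{n+p}{p}^{-1}\frac{(e^z-1)^n}{n!}$ (the right side is an entire function of $z$, and the left side is its Taylor series at $0$). *)

theory Defs
  imports "HOL-Complex_Analysis.Complex_Analysis"
begin

definition pBell_egf :: "nat \<Rightarrow> complex \<Rightarrow> complex" where
  "pBell_egf p z = (\<Sum>n. (exp z - 1) ^ n / (of_nat ((n + p) choose p) * of_nat (fact n)))"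

text \<open>p-Bell numbers: B_{n,p} = n! times the n-th Taylor coefficient at 0, i.e. the n-th derivative at 0.\<close>
definition pBell :: "nat \<Rightarrow> nat \<Rightarrow> complex" where
  "pBell n p = (deriv ^^ n) (pBell_egf p) 0"

end

theory Submission
  imports Defs
begin

lemma beta_nat:
  assumes "p \<ge> 1"
  shows "((\<lambda>t::real. t^n * (1-t)^(p-1)) has_integral (fact n * fact (p-1) / fact (n+p))) {0..1}"
proof -
  have "((\<lambda>t. t powr (real (n+1) - 1) * (1 - t) powr (real p - 1)) has_integral Beta (real (n+1)) (real p)) {0..1}"
    using assms by (intro has_integral_Beta_real) auto
  moreover have "Beta (real (n+1)) (real p) = fact n * fact (p-1) / fact (n+p)"
  proof -
    have "Gamma (real (n+1)) = fact n" using Gamma_fact[of n] by (simp add: add.commute)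
    moreover have "Gamma (real p) = fact (p-1)" using Gamma_fact[of "p-1"] assms by (simp add: of_nat_diff)
    moreover have "Gamma (real (n+1) + real p) = fact (n+p)" using Gamma_fact[of "n+p"]
      by (simp add: add_ac)
    ultimately show ?thesis by (simp add: Beta_def)
  qed
  ultimately have "((\<lambda>t. t powr (real (n+1) - 1) * (1 - t) powr (real p - 1)) has_integral (fact n * fact (p-1) / fact (n+p))) {0<..<1}"
    by (simp add: has_integral_Icc_iff_Ioo)
  moreover have "t powr (real (n+1) - 1) * (1 - t) powr (real p - 1) = t^n * (1-t)^(p-1)" if "t \<in> {0<..<1}" for t
  proof -
    have "real (n+1) - 1 = real n" by simp
    moreover have "real p - 1 = real (p-1)" using assms by (simp add: of_nat_diff)
    ultimately show ?thesis using that
      by (metis greaterThanLessThan_iff diff_gt_0_iff_gt powr_realpow)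
  qed
  ultimately have "((\<lambda>t::real. t^n * (1-t)^(p-1)) has_integral (fact n * fact (p-1) / fact (n+p))) {0<..<1}"
    using has_integral_cong by (metis (no_types, lifting))
  then show ?thesis by (simp add: has_integral_Icc_iff_Ioo)
qed

lemma key:
  fixes w :: complex and p :: nat
  assumes p: "p \<ge> 1"
  shows "(\<lambda>n. w ^ n / (of_nat ((n + p) choose p) * of_nat (fact n))) sums
    (of_nat p * integral {0..1::real}
       (\<lambda>t. exp (w * of_real t) * of_real ((1 - t) ^ (p - 1))))"
proof -
  define a where "a = (\<lambda>n (t::real). w^n / fact n * complex_of_real (t^n * (1-t)^(p-1)))"
  define g where "g = (\<lambda>t::real. exp (w * of_real t) * of_real ((1 - t) ^ (p - 1)))"
  have bnd: "norm (a n t) \<le> norm w ^ n / fact n" if "t \<in> {0..1}" for n t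
  proof -
    have "\<bar>t^n * (1-t)^(p-1)\<bar> \<le> 1" using that
      by (auto simp: abs_mult power_abs intro!: mult_le_one power_le_one)
    moreover obtain r where r: "r = t^n * (1-t)^(p-1)" by blast
    ultimately have "\<bar>r\<bar> \<le> 1" by simp
    have "norm (a n t) = norm w ^ n / fact n * \<bar>r\<bar>" unfolding a_def r
      by (simp only: norm_mult norm_divide norm_power norm_of_real norm_fact)
    also have "\<dots> \<le> norm w ^ n / fact n" using \<open>\<bar>r\<bar> \<le> 1\<close>
      by (rule mult_left_le) simp_all
    finally show ?thesis .
  qed
  have summ: "summable (\<lambda>n. norm w ^ n / fact n)"
    using summable_exp[of "norm w"] by (simp add: divide_inverse_commute)
  have lim: "suminf (\<lambda>n. a n t) = g t" for t
  proof -
    have "(\<lambda>n. (w * of_real t)^n /\<^sub>R fact n) sums exp (w * of_real t)" by (rule exp_converges)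
    then have "(\<lambda>n. (w * of_real t)^n /\<^sub>R fact n * of_real ((1 - t) ^ (p - 1))) sums g t"
      unfolding g_def by (rule sums_mult2)
    moreover have "(\<lambda>n. (w * of_real t)^n /\<^sub>R fact n * of_real ((1 - t) ^ (p - 1))) = (\<lambda>n. a n t)"
      by (auto simp: a_def scaleR_conv_of_real power_mult_distrib field_simps)
    ultimately show ?thesis by (simp add: sums_iff)
  qed
  have ul: "uniform_limit {0..1} (\<lambda>N t. \<Sum>n<N. a n t) g sequentially"
    using Weierstrass_m_test[of "{0..1}" a "\<lambda>n. norm w ^ n / fact n", OF bnd summ] lim by simp
  have cont: "continuous_on {0..1} (\<lambda>t. \<Sum>n<N. a n t)" for N
    unfolding a_def by (intro continuous_intros)
  obtain I J where I: "\<And>N. ((\<lambda>t. \<Sum>n<N. a n t) has_integral I N) {0..1}"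
    and J: "(g has_integral J) {0..1}" and IJ: "I \<longlonglongrightarrow> J"
    by (rule uniform_limit_integral[OF ul cont]) auto
  define c where "c = (\<lambda>n. w^n / fact n * complex_of_real (fact n * fact (p-1) / fact (n+p)))"
  have "((\<lambda>t. \<Sum>n<N. a n t) has_integral (\<Sum>n<N. c n)) {0..1}" for N
    unfolding a_def c_def
    by (intro has_integral_sum has_integral_mult_right has_integral_of_real beta_nat p) auto
  then have "I N = (\<Sum>n<N. c n)" for N using I has_integral_unique by blast
  then have "I = (\<lambda>N. \<Sum>n<N. c n)" by (rule ext)
  then have "(\<lambda>N. \<Sum>n<N. c n) \<longlonglongrightarrow> J" using IJ by simp
  then have "(\<lambda>N. of_nat p * (\<Sum>n<N. c n)) \<longlonglongrightarrow> of_nat p * J" by (intro tendsto_intros)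
  moreover have "of_nat p * c n = w ^ n / (of_nat ((n + p) choose p) * of_nat (fact n))" for n
  proof -
    have "of_nat ((n + p) choose p) = (fact (n+p) / (fact p * fact n) :: complex)"
      by (subst binomial_fact) auto
    moreover have "(fact p :: complex) = of_nat p * fact (p-1)"
      by (rule fact_reduce) (use p in simp)
    moreover have "complex_of_real (fact n * fact (p-1) / fact (n+p)) = fact n * fact (p-1) / fact (n+p)"
      by simp
    ultimately show ?thesis unfolding c_def by (simp add: field_simps)
  qed
  ultimately have "(\<lambda>n. w ^ n / (of_nat ((n + p) choose p) * of_nat (fact n))) sums (of_nat p * J)"
    unfolding sums_def by (simp add: sum_distrib_left)
  moreover have "J = integral {0..1} g" using J by (simp add: integral_unique)
  ultimately show ?thesis unfolding g_def by simp
qed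

theorem mainTheorem3:
  fixes p :: nat and z :: complex
  assumes "p \<ge> 1"
  shows "(\<lambda>n. pBell n p * z ^ n / of_nat (fact n)) sums
    (of_nat p * integral {0..1::real}
       (\<lambda>t. exp ((exp z - 1) * of_real t) * of_real ((1 - t) ^ (p - 1))))"
proof -
  define c where "c = (\<lambda>n. 1 / (of_nat ((n + p) choose p) * of_nat (fact n)) :: complex)"
  define F where "F = Abs_fps c"
  have eq: "u ^ n / (of_nat ((n + p) choose p) * of_nat (fact n)) = c n * u ^ n" for u :: complex and n
    unfolding c_def by simp
  have "summable (\<lambda>n. fps_nth F n * u ^ n)" for u
    using sums_summable[OF key[OF assms, of u]] unfolding eq F_def by simp
  then have rad: "fps_conv_radius F = \<infinity>"
    unfolding fps_conv_radius_def by (rule conv_radius_inftyI'')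
  have hF: "eval_fps F holomorphic_on UNIV"
    by (rule holomorphic_on_eval_fps) (simp add: rad)
  have fdef: "pBell_egf p = eval_fps F \<circ> (\<lambda>z. exp z - 1)"
    by (rule ext) (simp only: pBell_egf_def eval_fps_def F_def fps_nth_Abs_fps o_def eq)
  have hol: "pBell_egf p holomorphic_on ball 0 (norm z + 1)"
    unfolding fdef
    by (rule holomorphic_on_compose) (auto intro!: holomorphic_intros holomorphic_on_subset[OF hF])
  have "(\<lambda>n. (deriv ^^ n) (pBell_egf p) 0 / fact n * (z - 0) ^ n) sums pBell_egf p z"
    by (rule holomorphic_power_series[OF hol]) simp
  moreover have "pBell_egf p z = of_nat p * integral {0..1::real}
       (\<lambda>t. exp ((exp z - 1) * of_real t) * of_real ((1 - t) ^ (p - 1)))"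
    unfolding pBell_egf_def using key[OF assms, of "exp z - 1"] by (simp add: sums_iff)
  ultimately show ?thesis unfolding pBell_def by (simp add: field_simps)
qed

end
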